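(* Let $X_1\in\mathbb{R}^{n_1\times d}$, $X_2\in\mathbb{R}^{n_2\times d}$ and let $P_1=I-X_1^+X_1$, $P_2=I-X_2^+X_2$. Then for every integer $n\ge1$, $$\big\|(I-P_1)(P_2P_1)^n\big\|^2=\max_i\Big\{(\cos^2\theta_i)^{2n-1}(1-\cos^2\theta_i)\Big\},$$ where the maximum ranges over the non-zero principal angles $\theta_i\in(0,\pi/2]$ between $\mathrm{range}(X_1^\top)$ and $\mathrm{range}(X_2^\top)$ (equivalently between $\ker X_1$ and $\ker X_2$), with a maximum over the empty set being $0$.
   Context: $A^+$ is the Moore–Penrose pseudoinverse and $\|\cdot\|$ the spectral norm; $P_m$ is the orthogonal projection onto $\ker X_m$. Principal angles: for data matrices $X_1,X_2$ let $r=\min(\operatorname{rank}X_1,\operatorname{rank}X_2)$. The principal angles $0\le\theta_1\le\dots\le\theta_r\le\pi/2$ between $\mathrm{range}(X_1^\top)$ and $\mathrm{range}(X_2^\top)$ are defined recursively by $\cos\theta_i=|u_i^\top v_i|$, where $(u_i,v_i)$ maximizes $|u^\top v|$ over unit vectors $u\in\mathrm{range}(X_1^\top)$, $v\in\mathrm{range}(X_2^\top)$ with $u\perp u_j$, $v\perp v_j$ for all $j<i$. The non-zero principal angles between $\ker X_1$ and $\ker X_2$ (defined analogously) coincide with the non-zero ones between the row spaces. *)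

theory Defs
  imports "HOL-Analysis.Analysis"
begin

definition pinv :: "real^'n^'m \<Rightarrow> real^'m^'n" where
  "pinv A = (THE B. A ** B ** A = A \<and> B ** A ** B = B \<and>
                    transpose (A ** B) = A ** B \<and> transpose (B ** A) = B ** A)"

primrec matpow :: "real^'n^'n \<Rightarrow> nat \<Rightarrow> real^'n^'n" where
  "matpow A 0 = mat 1"
| "matpow A (Suc k) = A ** matpow A k"

definition spec_norm :: "real^'n^'m \<Rightarrow> real" where
  "spec_norm A = onorm (\<lambda>x. A *v x)"

definition row_space :: "real^'d^'n \<Rightarrow> (real^'d) set" where
  "row_space X = range (\<lambda>y. transpose X *v y)"

text \<open>u, v (indices 0..r-1) form a system of principal vector pairs between S and T,
  following the recursive variational definition.\<close>
definition principal_vectors ::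
  "(real^'d) set \<Rightarrow> (real^'d) set \<Rightarrow> nat \<Rightarrow> (nat \<Rightarrow> real^'d) \<Rightarrow> (nat \<Rightarrow> real^'d) \<Rightarrow> bool" where
  "principal_vectors S T r u v \<longleftrightarrow>
     (\<forall>i<r. u i \<in> S \<and> v i \<in> T \<and> norm (u i) = 1 \<and> norm (v i) = 1 \<and>
            (\<forall>j<i. u i \<bullet> u j = 0 \<and> v i \<bullet> v j = 0) \<and>
            (\<forall>x y. x \<in> S \<longrightarrow> y \<in> T \<longrightarrow> norm x = 1 \<longrightarrow> norm y = 1 \<longrightarrow>
                   (\<forall>j<i. x \<bullet> u j = 0 \<and> y \<bullet> v j = 0) \<longrightarrow> \<bar>x \<bullet> y\<bar> \<le> \<bar>u i \<bullet> v i\<bar>))"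

definition n_angles :: "real^'d^'n1 \<Rightarrow> real^'d^'n2 \<Rightarrow> nat" where
  "n_angles X1 X2 = min (rank X1) (rank X2)"

text \<open>The i-th principal angle theta_(i+1) (0-based index i < n_angles X1 X2).\<close>
definition principal_angle :: "real^'d^'n1 \<Rightarrow> real^'d^'n2 \<Rightarrow> nat \<Rightarrow> real" where
  "principal_angle X1 X2 i =
     (let (u, v) = (SOME (u, v). principal_vectors (row_space X1) (row_space X2) (n_angles X1 X2) u v)
      in arccos \<bar>u i \<bullet> v i\<bar>)"

end

theory Submission
  imports Defs
begin

declare transpose_matrix_vector[simp del]

lemma mv_inner: "((A::real^'n^'m) *v x) \<bullet> y = x \<bullet> (transpose A *v y)"
  by (metis dot_lmul_matrix inner_commute transpose_matrix_vector)

lemma mat_eqI: "(\<And>x. (A::real^'n^'m) *v x = B *v x) \<Longrightarrow> A = B"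
  by (simp add: matrix_eq)

lemma mat_diff_mv: "((A::real^'n^'m) - B) *v x = A *v x - B *v x"
  by (simp add: matrix_vector_mult_diff_rdistrib)

lemma mat_ldiff: "(A::real^'n^'m) ** (B - C) = A ** B - A ** C"
  by (rule mat_eqI) (simp add: matrix_vector_mul_assoc[symmetric] mat_diff_mv matrix_vector_mult_diff_distrib)

lemma mat_rdiff: "((B::real^'n^'m) - C) ** A = B ** A - C ** A"
  by (rule mat_eqI) (simp add: matrix_vector_mul_assoc[symmetric] mat_diff_mv)

lemma transpose_diff: "transpose ((A::real^'n^'m) - B) = transpose A - transpose B"
  by (simp add: transpose_def vec_eq_iff)

definition penrose :: "real^'n^'m \<Rightarrow> real^'m^'n \<Rightarrow> bool" where
  "penrose A B \<longleftrightarrow> A ** B ** A = A \<and> B ** A ** B = B \<and>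
                    transpose (A ** B) = A ** B \<and> transpose (B ** A) = B ** A"

lemma penrose_unique:
  assumes "penrose X B" "penrose X C" shows "B = C"
proof -
  note p = assms[unfolded penrose_def]
  have XT: "transpose X = transpose X ** X ** C"
  proof -
    have "transpose X = transpose (X ** C ** X)" using p by simp
    also have "\<dots> = transpose X ** transpose (X ** C)" by (simp add: matrix_transpose_mul)
    also have "\<dots> = transpose X ** (X ** C)" using p by simp
    finally show ?thesis by (simp add: matrix_mul_assoc)
  qed
  have XT2: "transpose X = B ** X ** transpose X"
  proof -
    have "transpose X = transpose (X ** B ** X)" using p by simp
    also have "\<dots> = transpose (B ** X) ** transpose X" by (simp add: matrix_transpose_mul matrix_mul_assoc)
    also have "\<dots> = B ** X ** transpose X" using p by simp
    finally show ?thesis .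
  qed
  have "B = B ** (X ** B)" using p by (simp add: matrix_mul_assoc)
  also have "\<dots> = B ** transpose (X ** B)" using p by simp
  also have "\<dots> = B ** transpose B ** transpose X" by (simp add: matrix_transpose_mul matrix_mul_assoc)
  also have "\<dots> = B ** transpose B ** (transpose X ** X ** C)" using XT by simp
  also have "\<dots> = B ** (transpose (X ** B)) ** X ** C" by (simp add: matrix_transpose_mul matrix_mul_assoc)
  also have "\<dots> = B ** X ** B ** X ** C" using p by (simp add: matrix_mul_assoc)
  also have "\<dots> = B ** X ** C" using p by (simp add: matrix_mul_assoc)
  finally have 1: "B = B ** X ** C" .
  have "C = (C ** X) ** C" using p by (simp add: matrix_mul_assoc)
  also have "\<dots> = transpose (C ** X) ** C" using p by simp
  also have "\<dots> = transpose X ** transpose C ** C" by (simp add: matrix_transpose_mul)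
  also have "\<dots> = B ** X ** transpose X ** transpose C ** C" using XT2 by simp
  also have "\<dots> = B ** X ** (transpose (C ** X)) ** C" by (simp add: matrix_transpose_mul matrix_mul_assoc)
  also have "\<dots> = B ** X ** (C ** X) ** C" using p by simp
  also have "\<dots> = B ** X ** (C ** X ** C)" by (simp only: matrix_mul_assoc)
  also have "\<dots> = B ** X ** C" using p by simp
  finally show ?thesis using 1 by simp
qed




lemma sub_range: "subspace (range (\<lambda>y. (A::real^'n^'m) *v y))"
  by (metis linear_subspace_image matrix_vector_mul_linear subspace_UNIV)

lemma sym_by_inner:
  assumes "\<And>x y. ((M::real^'n^'n) *v x) \<bullet> y = x \<bullet> (M *v y)"
  shows "transpose M = M"
proof (rule mat_eqI)
  fix y
  have "\<forall>x. x \<bullet> (transpose M *v y - M *v y) = 0"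
    using assms by (simp add: inner_diff_right mv_inner[symmetric] inner_commute)
  then show "transpose M *v y = M *v y"
    by (metis eq_iff_diff_eq_0 inner_eq_zero_iff)
qed

lemma penrose_exists: "\<exists>B. penrose (X::real^'d^'m) B"
proof -
  define R where "R = range (\<lambda>y. transpose X *v y)"
  define G where "G = transpose X ** X"
  have subR: "subspace R" unfolding R_def by (rule sub_range)
  have quad: "x \<bullet> (G *v x) = (X *v x) \<bullet> (X *v x)" for x
    by (simp add: G_def mv_inner matrix_vector_mul_assoc[symmetric] del: transpose_matrix_vector)
  have ker: "x = 0" if xR: "x \<in> R" and Xx: "X *v x = 0" for x
  proof -
    obtain y where y: "x = transpose X *v y" using xR R_def by auto
    have "x \<bullet> x = y \<bullet> (X *v x)" using y by (simp add: mv_inner del: transpose_matrix_vector)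
    then show ?thesis using Xx by simp
  qed
  have kerG: "x = 0" if "x \<in> R" "G *v x = 0" for x
    using ker[OF that(1)] quad[of x] that by simp
  have GR: "G *v x \<in> R" for x
    unfolding R_def G_def by (simp add: matrix_vector_mul_assoc[symmetric] del: transpose_matrix_vector)
  have inj: "inj_on (\<lambda>x. G *v x) R"
  proof (rule inj_onI)
    fix x x' assume "x \<in> R" "x' \<in> R" "G *v x = G *v x'"
    then have "x - x' \<in> R" "G *v (x - x') = 0"
      by (auto simp: subR subspace_diff matrix_vector_mult_diff_distrib)
    then show "x = x'" using kerG[of "x - x'"] by simp
  qed
  have sub2: "subspace ((\<lambda>x. G *v x) ` R)"
    by (simp add: linear_subspace_image subR)
  have "dim ((\<lambda>x. G *v x) ` R) = dim R"
    by (metis dim_image_eq span_eq_iff subR inj matrix_vector_mul_linear)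
  then have img: "(\<lambda>x. G *v x) ` R = R"
    using subspace_dim_equal[OF sub2 subR] GR by auto
  obtain g where g: "range g \<subseteq> span R" "linear g" "\<forall>x\<in>span R. g (G *v x) = x"
    using linear_inj_on_left_inverse[of "\<lambda>x. G *v x" R] inj subR by (metis span_eq_iff matrix_vector_mul_linear)
  have spR: "span R = R" using subR by simp
  define B where "B = matrix (\<lambda>y. g (transpose X *v y))"
  have lin: "linear (\<lambda>y. g (transpose X *v y))"
    using linear_compose[OF matrix_vector_mul_linear g(2)] unfolding o_def by blast
  have Bv: "B *v y = g (transpose X *v y)" for y
    unfolding B_def using matrix_vector_mul(2)[OF lin] by metis
  have BR: "B *v y \<in> R" for y using g(1) spR Bv by auto
  have GB: "G *v (B *v y) = transpose X *v y" for y
  proof -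
    have "transpose X *v y \<in> R" unfolding R_def by auto
    then obtain r where r: "r \<in> R" "transpose X *v y = G *v r" using img by force
    then show ?thesis using Bv g(3) spR by simp
  qed
  have XGB: "transpose X *v (X *v (B *v y)) = transpose X *v y" for y
    using GB by (simp add: G_def matrix_vector_mul_assoc[symmetric] del: transpose_matrix_vector)
  have p1: "X *v (B *v (X *v x)) = X *v x" for x
  proof -
    let ?z = "B *v (X *v x) - x"
    have "G *v ?z = 0"
      using GB[of "X *v x"] by (simp add: matrix_vector_mult_diff_distrib G_def matrix_vector_mul_assoc[symmetric] del: transpose_matrix_vector)
    then have "X *v ?z = 0" using quad[of ?z] by simp
    then show ?thesis by (simp add: matrix_vector_mult_diff_distrib)
  qed
  have p2: "B *v (X *v (B *v y)) = B *v y" for y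
  proof -
    let ?w = "B *v (X *v (B *v y)) - B *v y"
    have "?w \<in> R" using BR subR by (simp add: subspace_diff)
    moreover have "X *v ?w = 0" using p1[of "B *v y"] by (simp add: matrix_vector_mult_diff_distrib)
    ultimately show ?thesis using ker by fastforce
  qed
  have p3: "(X *v (B *v x)) \<bullet> y = x \<bullet> (X *v (B *v y))" for x y
  proof -
    have e: "(X *v (B *v x)) \<bullet> (X *v (B *v y)) = (X *v (B *v x)) \<bullet> y" for x y
      using XGB[of y] by (metis mv_inner)
    show ?thesis using e[of x y] e[of y x] by (simp add: inner_commute)
  qed
  have p4: "(B *v (X *v x)) \<bullet> y = x \<bullet> (B *v (X *v y))" for x y
  proof -
    have e: "(B *v (X *v x)) \<bullet> y = (B *v (X *v x)) \<bullet> (B *v (X *v y))" for x y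
    proof -
      obtain w where w: "B *v (X *v x) = transpose X *v w" using BR[of "X *v x"] R_def by auto
      have "(B *v (X *v x)) \<bullet> y = w \<bullet> (X *v y)" using w by (metis mv_inner transpose_transpose)
      also have "\<dots> = w \<bullet> (X *v (B *v (X *v y)))" using p1 by simp
      also have "\<dots> = (B *v (X *v x)) \<bullet> (B *v (X *v y))" using w by (metis mv_inner transpose_transpose)
      finally show ?thesis .
    qed
    show ?thesis using e[of x y] e[of y x] by (simp add: inner_commute)
  qed
  have "penrose X B"
    unfolding penrose_def
  proof (intro conjI)
    show "X ** B ** X = X" by (rule mat_eqI) (simp add: matrix_vector_mul_assoc[symmetric] p1)
    show "B ** X ** B = B" by (rule mat_eqI) (simp add: matrix_vector_mul_assoc[symmetric] p2)
    show "transpose (X ** B) = X ** B" by (rule sym_by_inner) (simp add: matrix_vector_mul_assoc[symmetric] p3)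
    show "transpose (B ** X) = B ** X" by (rule sym_by_inner) (simp add: matrix_vector_mul_assoc[symmetric] p4)
  qed
  then show ?thesis by blast
qed

lemma pinv_penrose: "penrose X (pinv X)"
proof -
  have "\<exists>!B. penrose X B" using penrose_exists penrose_unique by blast
  then show ?thesis unfolding pinv_def penrose_def[symmetric] by (rule theI')
qed




definition proj :: "real^'n^'n \<Rightarrow> bool" where
  "proj P \<longleftrightarrow> transpose P = P \<and> P ** P = P"

lemma proj_inner: "proj P \<Longrightarrow> (P *v x) \<bullet> y = x \<bullet> (P *v y)"
  unfolding proj_def by (metis mv_inner)

lemma proj_idem: "proj P \<Longrightarrow> P *v (P *v x) = P *v x"
  unfolding proj_def by (simp add: matrix_vector_mul_assoc)

lemma compl_mv: "(mat 1 - P) *v x = x - (P::real^'n^'n) *v x"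
  by (simp add: mat_diff_mv)

lemma proj_compl: "proj P \<Longrightarrow> proj (mat 1 - P)"
  unfolding proj_def
  by (auto simp: transpose_diff mat_ldiff mat_rdiff)

lemma proj_sq: "proj P \<Longrightarrow> (P *v x) \<bullet> (P *v x) = x \<bullet> (P *v x)"
  by (metis proj_idem proj_inner)

lemma proj_in: "proj P \<Longrightarrow> y \<in> {x. P *v x = x} \<Longrightarrow> x \<bullet> y = (P *v x) \<bullet> y"
  by (simp add: proj_inner)

lemma proj_subspace: "subspace {x. (P::real^'n^'n) *v x = x}"
  unfolding subspace_def
  by (auto simp: matrix_vector_right_distrib matrix_vector_mult_scaleR)

lemma pinv_proj: "proj (pinv X ** X)"
  using pinv_penrose[of X] unfolding penrose_def proj_def
  by (metis matrix_mul_assoc)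

lemma pinv_X: "X *v ((pinv X ** X) *v x) = X *v x"
  using pinv_penrose[of X] unfolding penrose_def
  by (metis matrix_vector_mul_assoc)

lemma row_space_eq: "row_space X = {x. (pinv X ** X) *v x = x}"
proof -
  let ?B = "pinv X" let ?Q = "?B ** X"
  have p: "penrose X ?B" by (rule pinv_penrose)
  have Qt: "?Q = transpose X ** transpose ?B"
    using p unfolding penrose_def by (metis matrix_transpose_mul)
  have QX: "?Q ** transpose X = transpose X"
  proof -
    have "?Q ** transpose X = transpose (X ** ?B ** X)"
      using Qt by (simp add: matrix_transpose_mul matrix_mul_assoc)
    then show ?thesis using p unfolding penrose_def by simp
  qed
  show ?thesis
  proof (intro set_eqI iffI)
    fix x assume "x \<in> row_space X"
    then obtain y where "x = transpose X *v y" unfolding row_space_def by auto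
    then show "x \<in> {x. ?Q *v x = x}" using QX by (simp add: matrix_vector_mul_assoc)
  next
    fix x assume "x \<in> {x. ?Q *v x = x}"
    then have "x = transpose X *v (transpose ?B *v x)"
      using Qt by (simp add: matrix_vector_mul_assoc)
    then show "x \<in> row_space X" unfolding row_space_def by blast
  qed
qed

lemma rank_row_space: "rank X = dim (row_space X)"
  unfolding row_space_def by (metis rank_dim_range rank_transpose)




lemma par_unit:
  fixes w b :: "real^'n"
  assumes "norm b = 1" "w \<bullet> b = s" "norm w \<le> \<bar>s\<bar>"
  shows "w = s *\<^sub>R b"
proof -
  have bb: "b \<bullet> b = 1" using assms(1) by (simp add: dot_square_norm)
  have "norm w * norm w \<le> s * s" using assms(3) norm_ge_zero by (metis abs_mult_self_eq mult_mono' abs_ge_zero)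
  then have ww: "w \<bullet> w \<le> s * s" by (simp add: dot_square_norm power2_eq_square)
  have "(w - s *\<^sub>R b) \<bullet> (w - s *\<^sub>R b) = w \<bullet> w - 2 * s * (w \<bullet> b) + s * s * (b \<bullet> b)"
    by (simp add: inner_diff_left inner_diff_right inner_commute algebra_simps)
  also have "\<dots> = w \<bullet> w - s * s" using assms(2) bb by simp
  finally have "(w - s *\<^sub>R b) \<bullet> (w - s *\<^sub>R b) \<le> 0" using ww by simp
  then show ?thesis by (metis eq_iff_diff_eq_0 inner_eq_zero_iff inner_ge_zero order_antisym)
qed

lemma pv_struct:
  assumes Q: "proj Q" and Q': "proj Q'"
    and pv: "principal_vectors {x. Q *v x = x} {x. Q' *v x = x} r u v"
  shows "i < r \<Longrightarrow> Q' *v u i = (u i \<bullet> v i) *\<^sub>R v i \<and> Q *v v i = (u i \<bullet> v i) *\<^sub>R u i"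
proof (induction i rule: less_induct)
  case (less i)
  let ?S = "{x. Q *v x = x}" and ?T = "{x. Q' *v x = x}"
  let ?s = "u i \<bullet> v i"
  have C: "u i \<in> ?S \<and> v i \<in> ?T \<and> norm (u i) = 1 \<and> norm (v i) = 1 \<and>
     (\<forall>j<i. u i \<bullet> u j = 0 \<and> v i \<bullet> v j = 0) \<and>
     (\<forall>x y. x \<in> ?S \<longrightarrow> y \<in> ?T \<longrightarrow> norm x = 1 \<longrightarrow> norm y = 1 \<longrightarrow>
         (\<forall>j<i. x \<bullet> u j = 0 \<and> y \<bullet> v j = 0) \<longrightarrow> \<bar>x \<bullet> y\<bar> \<le> \<bar>?s\<bar>)"
    using pv[unfolded principal_vectors_def, THEN spec[of _ i]] less.prems by (rule mp)
  have P: "u i \<in> ?S" "v i \<in> ?T" "norm (u i) = 1" "norm (v i) = 1"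
     "\<And>j. j < i \<Longrightarrow> u i \<bullet> u j = 0 \<and> v i \<bullet> v j = 0"
     "\<And>x y. x \<in> ?S \<Longrightarrow> y \<in> ?T \<Longrightarrow> norm x = 1 \<Longrightarrow> norm y = 1 \<Longrightarrow>
         (\<forall>j<i. x \<bullet> u j = 0 \<and> y \<bullet> v j = 0) \<Longrightarrow> \<bar>x \<bullet> y\<bar> \<le> \<bar>?s\<bar>"
    using C by simp_all
  have IH: "\<And>j. j < i \<Longrightarrow> Q' *v u j = (u j \<bullet> v j) *\<^sub>R v j \<and> Q *v v j = (u j \<bullet> v j) *\<^sub>R u j"
    using less by auto
  have Pj: "u j \<in> ?S \<and> v j \<in> ?T" if "j < i" for j
  proof -
    have "j < r" using that less.prems by simp
    note c = mp[OF pv[unfolded principal_vectors_def, THEN spec[of _ j]] this]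
    show ?thesis using conjunct1[OF c] conjunct1[OF conjunct2[OF c]] by (rule conjI)
  qed
  have uv: "u i \<bullet> v j = 0" if "j < i" for j
  proof -
    have "u i \<bullet> v j = u i \<bullet> (Q *v v j)" using P(1) proj_inner[OF Q, of "v j" "u i"] by (simp add: inner_commute)
    then show ?thesis using IH[OF that] P(5)[OF that] by simp
  qed
  have vu: "v i \<bullet> u j = 0" if "j < i" for j
  proof -
    have "v i \<bullet> u j = v i \<bullet> (Q' *v u j)" using P(2) proj_inner[OF Q', of "u j" "v i"] by (simp add: inner_commute)
    then show ?thesis using IH[OF that] P(5)[OF that] by simp
  qed
  define w where "w = Q' *v u i"
  have wT: "w \<in> ?T" unfolding w_def using proj_idem[OF Q'] by simp
  have wv: "w \<bullet> v j = 0" if "j < i" for j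
  proof -
    have "w \<bullet> v j = u i \<bullet> (Q' *v v j)" unfolding w_def using proj_inner[OF Q'] by simp
    also have "\<dots> = u i \<bullet> v j" using Pj[OF that] by simp
    finally show ?thesis using uv[OF that] by simp
  qed
  have ws: "w \<bullet> v i = ?s" unfolding w_def using proj_inner[OF Q'] P(2) by simp
  have uw: "u i \<bullet> w = norm w * norm w"
    unfolding w_def using proj_sq[OF Q'] by (metis dot_square_norm power2_eq_square)
  have nw: "norm w \<le> \<bar>?s\<bar>"
  proof (cases "w = 0")
    case True then show ?thesis by simp
  next
    case False
    let ?y = "(1 / norm w) *\<^sub>R w"
    have "?y \<in> ?T" using wT by (simp add: matrix_vector_mult_scaleR)
    moreover have "norm ?y = 1" using False by simp
    moreover have "\<forall>j<i. u i \<bullet> u j = 0 \<and> ?y \<bullet> v j = 0" using P(5) wv by simp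
    ultimately have "\<bar>u i \<bullet> ?y\<bar> \<le> \<bar>?s\<bar>" using P(6)[OF P(1) _ P(3)] by blast
    moreover have "u i \<bullet> ?y = norm w" using uw False by simp
    ultimately show ?thesis by (metis abs_norm_cancel)
  qed
  have c1: "Q' *v u i = ?s *\<^sub>R v i"
    using par_unit[OF P(4) ws nw] unfolding w_def .
  define z where "z = Q *v v i"
  have zS: "z \<in> ?S" unfolding z_def using proj_idem[OF Q] by simp
  have zu: "z \<bullet> u j = 0" if "j < i" for j
  proof -
    have "z \<bullet> u j = v i \<bullet> (Q *v u j)" unfolding z_def using proj_inner[OF Q] by simp
    also have "\<dots> = v i \<bullet> u j" using Pj[OF that] by simp
    finally show ?thesis using vu[OF that] by simp
  qed
  have zs: "z \<bullet> u i = ?s" unfolding z_def using proj_inner[OF Q, of "v i" "u i"] P(1) by (simp add: inner_commute)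
  have vz: "z \<bullet> v i = norm z * norm z"
    unfolding z_def using proj_sq[OF Q] by (metis dot_square_norm power2_eq_square inner_commute)
  have nz: "norm z \<le> \<bar>?s\<bar>"
  proof (cases "z = 0")
    case True then show ?thesis by simp
  next
    case False
    let ?x = "(1 / norm z) *\<^sub>R z"
    have "?x \<in> ?S" using zS by (simp add: matrix_vector_mult_scaleR)
    moreover have "norm ?x = 1" using False by simp
    moreover have "\<forall>j<i. ?x \<bullet> u j = 0 \<and> v i \<bullet> v j = 0" using P(5) zu by simp
    ultimately have "\<bar>?x \<bullet> v i\<bar> \<le> \<bar>?s\<bar>" using P(6)[OF _ P(2) _ P(4)] by blast
    moreover have "?x \<bullet> v i = norm z" using vz False by simp
    ultimately show ?thesis by (metis abs_norm_cancel)
  qed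
  have c2: "Q *v v i = ?s *\<^sub>R u i"
    using par_unit[OF P(3) zs nz] unfolding z_def .
  show ?case using c1 c2 by blast
qed




lemma pv_basic:
  assumes "principal_vectors S T r u v" "i < r"
  shows "u i \<in> S \<and> v i \<in> T \<and> norm (u i) = 1 \<and> norm (v i) = 1 \<and> (\<forall>j<i. u i \<bullet> u j = 0 \<and> v i \<bullet> v j = 0)"
proof -
  note c = mp[OF assms(1)[unfolded principal_vectors_def, THEN spec[of _ i]] assms(2)]
  show ?thesis using c by simp
qed

lemma orth_full:
  fixes w :: "nat \<Rightarrow> real^'n"
  assumes S: "subspace S" and w: "\<And>i. i < r \<Longrightarrow> w i \<in> S \<and> norm (w i) = 1"
    and o: "\<And>i j. i < r \<Longrightarrow> j < i \<Longrightarrow> w i \<bullet> w j = 0"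
    and r: "r = dim S" and zS: "z \<in> S" and zo: "\<And>i. i < r \<Longrightarrow> z \<bullet> w i = 0"
  shows "z = 0"
proof (rule ccontr)
  assume z: "z \<noteq> 0"
  have o2: "w i \<bullet> w j = 0" if "i < r" "j < r" "i \<noteq> j" for i j
  proof (cases "j < i")
    case True then show ?thesis using o that by simp
  next
    case False then have "i < j" using that by simp
    then show ?thesis using o[of j i] that by (simp add: inner_commute)
  qed
  have ww: "w i \<bullet> w i = 1" if "i < r" for i using w[OF that] by (simp add: dot_square_norm)
  have inj: "inj_on w {..<r}"
  proof (rule inj_onI)
    fix i j assume "i \<in> {..<r}" "j \<in> {..<r}" "w i = w j"
    then show "i = j" using o2[of i j] ww[of i] by (cases "i = j") auto
  qed
  have zn: "z \<notin> w ` {..<r}"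
  proof
    assume "z \<in> w ` {..<r}"
    then obtain i where "i < r" "z = w i" by auto
    then show False using zo[of i] ww[of i] by simp
  qed
  let ?F = "insert z (w ` {..<r})"
  have "pairwise orthogonal ?F"
    unfolding pairwise_def orthogonal_def
  proof (intro ballI impI)
    fix a b assume ab: "a \<in> ?F" "b \<in> ?F" "a \<noteq> b"
    show "a \<bullet> b = 0"
    proof (cases "a = z")
      case True
      then obtain j where "j < r" "b = w j" using ab by auto
      then show ?thesis using zo True by simp
    next
      case False
      then obtain i where i: "i < r" "a = w i" using ab by auto
      show ?thesis
      proof (cases "b = z")
        case True then show ?thesis using zo[of i] i by (simp add: inner_commute)
      next
        case False
        then obtain j where "j < r" "b = w j" using ab by auto
        then show ?thesis using o2[of i j] i ab by auto
      qed
    qed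
  qed
  moreover have "0 \<notin> ?F"
  proof -
    have "w i \<noteq> 0" if "i < r" for i using w[OF that] by auto
    then show ?thesis using z by auto
  qed
  ultimately have ind: "independent ?F" by (rule pairwise_orthogonal_independent)
  have "?F \<subseteq> S" using zS w by auto
  then have "card ?F \<le> dim S" using ind by (rule independent_card_le_dim)
  moreover have "card ?F = Suc r" using zn inj by (simp add: card_image)
  ultimately show False using r by simp
qed




lemma complete_eig:
  assumes Q: "proj Q" and Q': "proj Q'"
    and pv: "principal_vectors {x. Q *v x = x} {x. Q' *v x = x} r u v"
    and r: "r = dim {x. Q *v x = x} \<or> r = dim {x. Q' *v x = x}"
    and eig: "Q *v (Q' *v (Q *v x)) = lam *\<^sub>R x" and x0: "x \<noteq> 0" and l0: "lam \<noteq> 0"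
  shows "\<exists>i<r. lam = (u i \<bullet> v i)\<^sup>2"
proof (rule ccontr)
  assume ne: "\<not> ?thesis"
  note st = pv_struct[OF Q Q' pv]
  note bas = pv_basic[OF pv]
  have xS: "Q *v x = x"
  proof -
    have "Q *v (lam *\<^sub>R x) = lam *\<^sub>R x" using proj_idem[OF Q, of "Q' *v (Q *v x)"] eig by simp
    then show ?thesis using l0 by (simp add: matrix_vector_mult_scaleR)
  qed
  have Msym: "(Q *v (Q' *v (Q *v a))) \<bullet> b = a \<bullet> (Q *v (Q' *v (Q *v b)))" for a b
    using proj_inner[OF Q, of "Q' *v (Q *v a)" b] proj_inner[OF Q', of "Q *v a" "Q *v b"]
      proj_inner[OF Q, of a "Q' *v (Q *v b)"] by simp
  have Mu: "Q *v (Q' *v (Q *v u i)) = (u i \<bullet> v i)\<^sup>2 *\<^sub>R u i" if "i < r" for i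
    using st[OF that] bas[OF that] by (simp add: matrix_vector_mult_scaleR power2_eq_square)
  have xu: "x \<bullet> u i = 0" if "i < r" for i
  proof -
    have "lam * (x \<bullet> u i) = (u i \<bullet> v i)\<^sup>2 * (x \<bullet> u i)"
      using Msym[of x "u i"] eig Mu[OF that] by simp
    then show ?thesis using ne that by auto
  qed
  show False
  proof (cases "r = dim {x. Q *v x = x}")
    case True
    have "x = 0"
      by (rule orth_full[where w=u and z=x, OF proj_subspace _ _ True]) (use bas xu xS in \<open>auto simp: inner_commute\<close>)
    then show False using x0 by simp
  next
    case False
    then have rT: "r = dim {x. Q' *v x = x}" using r by simp
    define y where "y = Q' *v x"
    have yT: "Q' *v y = y" unfolding y_def using proj_idem[OF Q'] by simp
    have yv: "y \<bullet> v i = 0" if "i < r" for i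
    proof -
      have "y \<bullet> v i = x \<bullet> v i" unfolding y_def using proj_inner[OF Q', of x "v i"] bas[OF that] by simp
      also have "\<dots> = x \<bullet> (Q *v v i)" using proj_inner[OF Q, of x "v i"] xS by simp
      also have "\<dots> = 0" using st[OF that] xu[OF that] by simp
      finally show ?thesis .
    qed
    have "y \<bullet> y = x \<bullet> (Q' *v x)" unfolding y_def by (rule proj_sq[OF Q'])
    also have "\<dots> = x \<bullet> (Q *v (Q' *v (Q *v x)))"
      using proj_inner[OF Q, of x "Q' *v (Q *v x)"] xS by simp
    also have "\<dots> = lam * (x \<bullet> x)" using eig by simp
    finally have yy: "y \<bullet> y = lam * (x \<bullet> x)" .
    have "y = 0"
      by (rule orth_full[where w=v and z=y, OF proj_subspace _ _ rT]) (use bas yv yT in \<open>auto simp: inner_commute\<close>)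
    then show False using yy x0 l0 by simp
  qed
qed




lemma nz_orth:
  fixes w :: "nat \<Rightarrow> real^'n"
  assumes S: "subspace S" and k: "k < dim S" and w: "\<And>j. j < k \<Longrightarrow> w j \<in> S"
  shows "\<exists>x\<in>S. x \<noteq> 0 \<and> (\<forall>j<k. x \<bullet> w j = 0)"
proof -
  let ?W = "w ` {..<k}"
  have spS: "span S = S" using S by simp
  have sub: "span ?W \<subseteq> span S" using w by (intro span_mono) auto
  have "dim ?W \<le> card ?W" by (rule dim_le_card) (auto intro: span_base)
  also have "\<dots> \<le> k" using card_image_le[of "{..<k}" w] by simp
  finally have "dim (span ?W) < dim (span S)" using k by simp
  then have "span ?W \<noteq> span S" by (metis less_irrefl)
  with sub have ss: "span ?W \<subset> span S" by auto
  obtain x where x: "x \<noteq> 0" "x \<in> span S" "\<And>y. y \<in> span ?W \<Longrightarrow> orthogonal x y"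
    using orthogonal_to_subspace_exists_gen[OF ss] by blast
  have "x \<bullet> w j = 0" if "j < k" for j
    using x(3)[of "w j"] that by (auto intro: span_base simp: orthogonal_def)
  then show ?thesis using x spS by auto
qed

lemma pv_exists:
  fixes S T :: "(real^'n) set"
  assumes S: "subspace S" and T: "subspace T"
  shows "k \<le> dim S \<Longrightarrow> k \<le> dim T \<Longrightarrow> \<exists>u v. principal_vectors S T k u v"
proof (induction k)
  case 0
  then show ?case by (simp add: principal_vectors_def)
next
  case (Suc k)
  then obtain u v where pv: "principal_vectors S T k u v" by auto
  note bas = pv_basic[OF pv]
  define S' where "S' = S \<inter> (\<Inter>j\<in>{..<k}. {x. u j \<bullet> x = 0})"
  define T' where "T' = T \<inter> (\<Inter>j\<in>{..<k}. {x. v j \<bullet> x = 0})"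
  have cS: "closed S'" unfolding S'_def using closed_subspace[OF S]
    by (intro closed_Int closed_INT) (auto intro: closed_hyperplane)
  have cT: "closed T'" unfolding T'_def using closed_subspace[OF T]
    by (intro closed_Int closed_INT) (auto intro: closed_hyperplane)
  obtain x where x: "x \<in> S" "x \<noteq> 0" "\<forall>j<k. x \<bullet> u j = 0"
    using nz_orth[OF S, of k u] Suc.prems bas by auto
  obtain y where y: "y \<in> T" "y \<noteq> 0" "\<forall>j<k. y \<bullet> v j = 0"
    using nz_orth[OF T, of k v] Suc.prems bas by auto
  define K where "K = (S' \<inter> sphere 0 1) \<times> (T' \<inter> sphere 0 1)"
  have Kc: "compact K" unfolding K_def
    using cS cT by (intro compact_Times) (auto intro: closed_Int_compact)
  have xK: "((1/norm x) *\<^sub>R x, (1/norm y) *\<^sub>R y) \<in> K"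
    unfolding K_def S'_def T'_def using x y S T
    by (auto simp: subspace_scale inner_commute)
  have "continuous_on K (\<lambda>p. \<bar>fst p \<bullet> snd p\<bar>)" by (intro continuous_intros)
  then obtain p where pK: "p \<in> K" and pmax: "\<forall>q\<in>K. \<bar>fst q \<bullet> snd q\<bar> \<le> \<bar>fst p \<bullet> snd p\<bar>"
    using continuous_attains_sup[OF Kc] xK by blast
  define u' where "u' = u(k := fst p)"
  define v' where "v' = v(k := snd p)"
  have pS: "fst p \<in> S" "norm (fst p) = 1" "\<forall>j<k. fst p \<bullet> u j = 0"
    and pT: "snd p \<in> T" "norm (snd p) = 1" "\<forall>j<k. snd p \<bullet> v j = 0"
    using pK unfolding K_def S'_def T'_def by (auto simp: inner_commute)
  have "principal_vectors S T (Suc k) u' v'"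
    unfolding principal_vectors_def
  proof (intro allI impI)
    fix i assume i: "i < Suc k"
    show "u' i \<in> S \<and> v' i \<in> T \<and> norm (u' i) = 1 \<and> norm (v' i) = 1 \<and>
            (\<forall>j<i. u' i \<bullet> u' j = 0 \<and> v' i \<bullet> v' j = 0) \<and>
            (\<forall>x y. x \<in> S \<longrightarrow> y \<in> T \<longrightarrow> norm x = 1 \<longrightarrow> norm y = 1 \<longrightarrow>
                   (\<forall>j<i. x \<bullet> u' j = 0 \<and> y \<bullet> v' j = 0) \<longrightarrow> \<bar>x \<bullet> y\<bar> \<le> \<bar>u' i \<bullet> v' i\<bar>)"
    proof (cases "i < k")
      case True
      have e: "u' j = u j" "v' j = v j" if "j < i" for j using that True by (auto simp: u'_def v'_def)
      have e1: "u' i = u i" "v' i = v i" using True by (auto simp: u'_def v'_def)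
      note c = mp[OF pv[unfolded principal_vectors_def, THEN spec[of _ i]] True]
      show ?thesis using c by (simp add: e e1 cong: imp_cong)
    next
      case False
      then have ik: "i = k" using i by simp
      have e: "u' j = u j" "v' j = v j" if "j < i" for j using that ik by (auto simp: u'_def v'_def)
      have uk: "u' i = fst p" "v' i = snd p" using ik by (auto simp: u'_def v'_def)
      show ?thesis unfolding uk
      proof (intro conjI allI impI)
        show "fst p \<in> S" "snd p \<in> T" "norm (fst p) = 1" "norm (snd p) = 1" using pS pT by auto
        fix j assume "j < i" then show "fst p \<bullet> u' j = 0" "snd p \<bullet> v' j = 0" using pS pT ik e by auto
      next
        fix a b assume ab: "a \<in> S" "b \<in> T" "norm a = 1" "norm b = 1" "\<forall>j<i. a \<bullet> u' j = 0 \<and> b \<bullet> v' j = 0"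
        then have "(a, b) \<in> K" unfolding K_def S'_def T'_def using ik e by (auto simp: inner_commute)
        then show "\<bar>a \<bullet> b\<bar> \<le> \<bar>fst p \<bullet> snd p\<bar>" using pmax by force
      qed
    qed
  qed
  then show ?case by blast
qed




lemma quad_zero:
  fixes a b :: real
  assumes "b \<ge> 0" "\<And>t. 0 \<le> 2*t*a + t^2*b"
  shows "a = 0"
proof -
  define c where "c = b + 1"
  have cp: "c > 0" using assms(1) by (simp add: c_def)
  define t where "t = -a/c"
  have tc: "t * c = -a" using cp by (simp add: t_def)
  have h: "0 \<le> 2*t*a + t^2*b" using assms(2) .
  have "0 \<le> (2*t*a + t^2*b) * c^2" using h by simp
  also have "\<dots> = 2*a*(t*c)*c + b*(t*c)^2" by (simp add: algebra_simps power2_eq_square)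
  also have "\<dots> = -2*a^2*c + a^2*b" using tc by (simp add: power2_eq_square)
  also have "\<dots> = - (a^2 * (b+2))" by (simp add: c_def algebra_simps power2_eq_square)
  finally have "a^2 * (b+2) \<le> 0" by simp
  moreover have "b + 2 > 0" using assms(1) by simp
  ultimately have "a^2 \<le> 0" by (simp add: mult_le_0_iff)
  then show ?thesis by simp
qed

lemma eig_max:
  fixes N :: "real^'n^'n"
  assumes sym: "transpose N = N" and E: "subspace E" and inv: "\<And>x. x \<in> E \<Longrightarrow> N *v x \<in> E"
    and x0: "x0 \<in> E" "x0 \<noteq> 0"
  shows "\<exists>x lam. x \<in> E \<and> norm x = 1 \<and> N *v x = lam *\<^sub>R x \<and> (\<forall>y\<in>E. y \<bullet> (N *v y) \<le> lam * (y \<bullet> y))"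
proof -
  have s: "a \<bullet> (N *v b) = b \<bullet> (N *v a)" for a b
    using mv_inner[of N a b] sym by (simp add: inner_commute)
  define K where "K = E \<inter> sphere 0 1"
  have Kc: "compact K" unfolding K_def using closed_subspace[OF E] by (auto intro: closed_Int_compact)
  have "(1 / norm x0) *\<^sub>R x0 \<in> K" unfolding K_def using x0 E by (simp add: subspace_scale)
  then have Kne: "K \<noteq> {}" by auto
  have "continuous_on K (\<lambda>x. x \<bullet> (N *v x))"
    by (intro continuous_intros linear_continuous_on matrix_vector_mul_bounded_linear)
  then obtain x where xK: "x \<in> K" and xmax: "\<forall>y\<in>K. y \<bullet> (N *v y) \<le> x \<bullet> (N *v x)"
    using continuous_attains_sup[OF Kc Kne] by blast
  define lam where "lam = x \<bullet> (N *v x)"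
  have xE: "x \<in> E" and xn: "norm x = 1" using xK by (auto simp: K_def)
  have xx: "x \<bullet> x = 1" using xn by (simp add: dot_square_norm)
  have bound: "y \<bullet> (N *v y) \<le> lam * (y \<bullet> y)" if yE: "y \<in> E" for y
  proof (cases "y = 0")
    case True then show ?thesis by simp
  next
    case False
    let ?z = "(1 / norm y) *\<^sub>R y"
    have "?z \<in> K" unfolding K_def using yE False E by (simp add: subspace_scale)
    then have "?z \<bullet> (N *v ?z) \<le> lam" using xmax lam_def by blast
    then have "(y \<bullet> (N *v y)) / (norm y)^2 \<le> lam"
      by (simp add: matrix_vector_mult_scaleR power2_eq_square divide_inverse mult_ac)
    then have "y \<bullet> (N *v y) \<le> lam * (norm y)^2" using False by (simp add: divide_le_eq)
    then show ?thesis by (simp add: dot_square_norm)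
  qed
  define d where "d = lam *\<^sub>R x - N *v x"
  have dE: "d \<in> E" unfolding d_def using xE inv E by (simp add: subspace_diff subspace_scale)
  have yd: "y \<bullet> d = 0" if yE: "y \<in> E" for y
  proof -
    let ?a = "y \<bullet> d" and ?b = "lam * (y \<bullet> y) - y \<bullet> (N *v y)"
    have b0: "?b \<ge> 0" using bound[OF yE] by simp
    have "0 \<le> 2*t*?a + t^2*?b" for t
    proof -
      have "x + t *\<^sub>R y \<in> E" using xE yE E by (simp add: subspace_add subspace_scale)
      from bound[OF this]
      have "(x + t *\<^sub>R y) \<bullet> (N *v (x + t *\<^sub>R y)) \<le> lam * ((x + t *\<^sub>R y) \<bullet> (x + t *\<^sub>R y))" .
      then have "x \<bullet> (N *v x) + 2 * t * (y \<bullet> (N *v x)) + t^2 * (y \<bullet> (N *v y))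
                  \<le> lam * (x \<bullet> x + 2 * t * (y \<bullet> x) + t^2 * (y \<bullet> y))"
        using s[of x y] by (simp add: matrix_vector_right_distrib matrix_vector_mult_scaleR
              inner_add_left inner_add_right inner_commute[of x y] algebra_simps power2_eq_square)
      then show ?thesis unfolding d_def using xx lam_def
        by (simp add: inner_diff_right algebra_simps power2_eq_square)
    qed
    then show ?thesis using quad_zero[OF b0] by blast
  qed
  have "d \<bullet> d = 0" using yd[OF dE] .
  then have "N *v x = lam *\<^sub>R x" unfolding d_def by simp
  then show ?thesis using xE xn bound by blast
qed




lemma transfer_eig:
  assumes P: "proj P" and P': "proj P'" and eig: "P *v (P' *v (P *v x)) = lam *\<^sub>R x"
    and x0: "x \<noteq> 0" and l0: "0 < lam" and l1: "lam < 1"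
  shows "\<exists>z. z \<noteq> 0 \<and> (mat 1 - P) *v ((mat 1 - P') *v ((mat 1 - P) *v z)) = lam *\<^sub>R z"
proof -
  have xP: "P *v x = x"
  proof -
    have "P *v (lam *\<^sub>R x) = lam *\<^sub>R x" using proj_idem[OF P, of "P' *v (P *v x)"] eig by simp
    then show ?thesis using l0 by (simp add: matrix_vector_mult_scaleR)
  qed
  have PP'x: "P *v (P' *v x) = lam *\<^sub>R x" using eig xP by simp
  define z where "z = lam *\<^sub>R x - P' *v x"
  have Pz: "P *v z = 0" unfolding z_def
    by (simp add: matrix_vector_mult_diff_distrib matrix_vector_mult_scaleR xP PP'x)
  have Qz: "(mat 1 - P) *v z = z" by (simp add: compl_mv Pz)
  have P'z: "P' *v z = lam *\<^sub>R (P' *v x) - P' *v x" unfolding z_def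
    by (simp add: matrix_vector_mult_diff_distrib matrix_vector_mult_scaleR proj_idem[OF P'])
  have Q'z: "(mat 1 - P') *v z = lam *\<^sub>R (x - P' *v x)"
    by (simp add: compl_mv P'z z_def algebra_simps matrix_vector_mult_diff_distrib matrix_vector_mult_scaleR proj_idem[OF P'])
  have "(mat 1 - P) *v ((mat 1 - P') *v z) = lam *\<^sub>R (x - P *v x - P' *v x + P *v (P' *v x))"
    unfolding Q'z by (simp add: compl_mv matrix_vector_mult_diff_distrib matrix_vector_mult_scaleR algebra_simps)
  also have "\<dots> = lam *\<^sub>R z" by (simp add: xP PP'x z_def)
  finally have e: "(mat 1 - P) *v ((mat 1 - P') *v ((mat 1 - P) *v z)) = lam *\<^sub>R z" by (simp add: Qz)
  have "z \<noteq> 0"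
  proof
    assume "z = 0"
    then have a: "P' *v x = lam *\<^sub>R x" by (simp add: z_def)
    have "P' *v (P' *v x) = P' *v x" by (rule proj_idem[OF P'])
    then have "lam *\<^sub>R lam *\<^sub>R x = lam *\<^sub>R x" using a by (simp add: matrix_vector_mult_scaleR)
    then have "(lam * lam - lam) *\<^sub>R x = 0" by (simp add: algebra_simps)
    then have "lam * lam = lam" using x0 by simp
    then show False using l0 l1 by (metis mult_cancel_right1 less_irrefl)
  qed
  then show ?thesis using e by blast
qed

lemma matpow_Suc_right: "matpow A (Suc k) = matpow A k ** A"
  by (induction k) (simp_all add: matrix_mul_assoc)

lemma matpow_add: "matpow A (a + b) = matpow A a ** matpow A b"
  by (induction a) (simp_all add: matrix_mul_assoc)

lemma matpow_comm: "A ** matpow A k = matpow A k ** A"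
  by (metis matpow.simps(2) matpow_Suc_right)

lemma matpow_transpose: "transpose (matpow A k) = matpow (transpose A) k"
  by (induction k) (simp_all add: matrix_transpose_mul matpow_Suc_right matpow_comm)

lemma matpow_eig: "A *v x = lam *\<^sub>R x \<Longrightarrow> matpow A k *v x = (lam ^ k) *\<^sub>R x"
  by (induction k) (simp_all add: matrix_vector_mul_assoc[symmetric] matrix_vector_mult_scaleR)

lemma key_identity:
  assumes P1: "proj P1" and P2: "proj P2" and n: "n \<ge> 1"
  defines "C \<equiv> P2 ** P1" and "B \<equiv> P1 ** P2 ** P1"
  shows "transpose ((mat 1 - P1) ** matpow C n) ** ((mat 1 - P1) ** matpow C n)
         = matpow B (2*n - 1) - matpow B (2*n)"
proof -
  have s1: "transpose P1 = P1" "P1 ** P1 = P1" using P1 by (auto simp: proj_def)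
  have s2: "transpose P2 = P2" "P2 ** P2 = P2" using P2 by (auto simp: proj_def)
  define D where "D = P1 ** P2"
  have Dt: "transpose C = D" by (simp add: C_def D_def matrix_transpose_mul s1 s2)
  have L1: "matpow D k ** P1 = P1 ** matpow C k" for k
  proof (induction k)
    case 0 then show ?case by simp
  next
    case (Suc k)
    have "matpow D (Suc k) ** P1 = D ** (matpow D k ** P1)" by (simp add: matrix_mul_assoc)
    also have "\<dots> = D ** P1 ** matpow C k" using Suc by (simp add: matrix_mul_assoc)
    also have "D ** P1 = P1 ** C" by (simp add: D_def C_def matrix_mul_assoc)
    finally show ?case by (simp add: matrix_mul_assoc)
  qed
  have CP1: "C ** P1 = C" by (simp add: C_def s1 flip: matrix_mul_assoc)
  have DC: "D ** C = P1 ** C"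
  proof -
    have "D ** C = P1 ** (P2 ** P2) ** P1" by (simp add: D_def C_def matrix_mul_assoc)
    then show ?thesis by (simp add: s2 C_def matrix_mul_assoc)
  qed
  have L3: "matpow B (Suc k) = P1 ** matpow C (Suc k)" for k
  proof (induction k)
    case 0 then show ?case by (simp add: B_def C_def matrix_mul_assoc)
  next
    case (Suc k)
    have "matpow B (Suc (Suc k)) = B ** (P1 ** matpow C (Suc k))" using Suc by simp
    also have "\<dots> = P1 ** (C ** P1) ** matpow C (Suc k)" by (simp add: B_def C_def matrix_mul_assoc)
    also have "\<dots> = P1 ** matpow C (Suc (Suc k))" by (simp add: CP1 matrix_mul_assoc)
    finally show ?case .
  qed
  obtain m where m: "n = Suc m" using n by (cases n) auto
  have Q: "transpose (mat 1 - P1) = mat 1 - P1" "(mat 1 - P1) ** (mat 1 - P1) = mat 1 - P1"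
    using proj_compl[OF P1] by (auto simp: proj_def)
  have "transpose ((mat 1 - P1) ** matpow C n) ** ((mat 1 - P1) ** matpow C n)
        = matpow D n ** ((mat 1 - P1) ** (mat 1 - P1)) ** matpow C n"
    by (simp only: matrix_transpose_mul matpow_transpose Dt Q(1) matrix_mul_assoc)
  also have "\<dots> = matpow D n ** matpow C n - matpow D n ** P1 ** matpow C n"
    unfolding Q(2) by (simp add: mat_ldiff mat_rdiff)
  also have "matpow D n ** matpow C n = matpow B (2*n - 1)"
  proof -
    have "matpow D n ** matpow C n = matpow D m ** (D ** C) ** matpow C m"
      unfolding m matpow_Suc_right[of D m] matpow.simps(2)[of C m] by (simp only: matrix_mul_assoc)
    also have "\<dots> = (matpow D m ** P1) ** C ** matpow C m" by (simp add: DC matrix_mul_assoc)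
    also have "\<dots> = P1 ** (matpow C m ** matpow C (Suc m))" by (simp add: L1 matrix_mul_assoc)
    also have "\<dots> = P1 ** matpow C (Suc (m + m))"
    proof -
      have "Suc (m + m) = m + Suc m" by simp
      then show ?thesis by (simp only: matpow_add)
    qed
    also have "\<dots> = matpow B (2*n - 1)" using L3[of "m + m"] m by (simp add: mult_2)
    finally show ?thesis .
  qed
  also have "matpow D n ** P1 ** matpow C n = matpow B (2*n)"
  proof -
    have "matpow D n ** P1 ** matpow C n = P1 ** (matpow C n ** matpow C n)"
      by (simp add: L1 matrix_mul_assoc)
    also have "\<dots> = P1 ** matpow C (Suc (Suc (m + m)))"
    proof -
      have "Suc (Suc (m + m)) = n + n" using m by simp
      then show ?thesis by (simp only: matpow_add)
    qed
    also have "\<dots> = matpow B (2*n)" using L3[of "Suc (m + m)"] m by (simp add: mult_2)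
    finally show ?thesis .
  qed
  finally show ?thesis .
qed




lemma proj_le: "proj P \<Longrightarrow> (P *v y) \<bullet> (P *v y) \<le> y \<bullet> y"
proof -
  assume P: "proj P"
  have "(P *v y) \<bullet> (P *v y) = y \<bullet> (P *v y)" by (rule proj_sq[OF P])
  also have "\<dots> \<le> norm y * norm (P *v y)" by (rule norm_cauchy_schwarz)
  finally have "norm (P *v y) * norm (P *v y) \<le> norm y * norm (P *v y)" by (simp add: dot_square_norm power2_eq_square)
  then have "norm (P *v y) \<le> norm y"
    by (cases "norm (P *v y) = 0") (auto simp: mult_le_cancel_right)
  then show ?thesis by (simp add: dot_square_norm power_mono)
qed

lemma eigB_range:
  assumes P1: "proj P1" and P2: "proj P2" and e: "(P1 ** P2 ** P1) *v x = lam *\<^sub>R x" and x0: "x \<noteq> 0"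
  shows "0 \<le> lam \<and> lam \<le> 1"
proof -
  have "lam * (x \<bullet> x) = x \<bullet> ((P1 ** P2 ** P1) *v x)" using e by simp
  also have "\<dots> = (P1 *v x) \<bullet> (P2 *v (P1 *v x))"
    using proj_inner[OF P1, of x "P2 *v (P1 *v x)"] by (simp add: matrix_vector_mul_assoc[symmetric])
  also have "\<dots> = (P2 *v (P1 *v x)) \<bullet> (P2 *v (P1 *v x))" using proj_sq[OF P2] by simp
  finally have h: "lam * (x \<bullet> x) = (P2 *v (P1 *v x)) \<bullet> (P2 *v (P1 *v x))" .
  have xx: "x \<bullet> x > 0" using x0 by simp
  have "(P2 *v (P1 *v x)) \<bullet> (P2 *v (P1 *v x)) \<le> x \<bullet> x"
    using proj_le[OF P2, of "P1 *v x"] proj_le[OF P1, of x] by linarith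
  then have "lam * (x \<bullet> x) \<le> 1 * (x \<bullet> x)" "0 * (x \<bullet> x) \<le> lam * (x \<bullet> x)" using h by auto
  then show ?thesis using xx by (meson mult_le_cancel_right_pos)
qed




theorem mainTheorem9:
  fixes X1 :: "real^'d^'n1" and X2 :: "real^'d^'n2" and n :: nat
  assumes "n \<ge> 1"
  defines "P1 \<equiv> mat 1 - pinv X1 ** X1"
      and "P2 \<equiv> mat 1 - pinv X2 ** X2"
  shows "(spec_norm ((mat 1 - P1) ** matpow (P2 ** P1) n))\<^sup>2 =
    (let A = {(cos (principal_angle X1 X2 i))\<^sup>2 ^ (2*n - 1) * (1 - (cos (principal_angle X1 X2 i))\<^sup>2) | i.
                i < n_angles X1 X2 \<and> principal_angle X1 X2 i \<noteq> 0}
     in if A = {} then 0 else Max A)"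
proof -
  note n = assms(1)
  define Q1 where "Q1 = pinv X1 ** X1"
  define Q2 where "Q2 = pinv X2 ** X2"
  have pQ1: "proj Q1" unfolding Q1_def by (rule pinv_proj)
  have pQ2: "proj Q2" unfolding Q2_def by (rule pinv_proj)
  have P1Q: "P1 = mat 1 - Q1" unfolding P1_def Q1_def ..
  have P2Q: "P2 = mat 1 - Q2" unfolding P2_def Q2_def ..
  have pP1: "proj P1" unfolding P1Q by (rule proj_compl[OF pQ1])
  have pP2: "proj P2" unfolding P2Q by (rule proj_compl[OF pQ2])
  have QP1: "mat 1 - P1 = Q1" unfolding P1Q by simp
  have QP2: "mat 1 - P2 = Q2" unfolding P2Q by simp
  define A where "A = (mat 1 - P1) ** matpow (P2 ** P1) n"
  define B where "B = P1 ** P2 ** P1"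
  define M where "M = transpose A ** A"
  define f where "f = (\<lambda>t::real. t ^ (2*n - 1) * (1 - t))"
  have f0: "f 0 = 0"
  proof -
    have "2*n - 1 \<noteq> 0" using n by simp
    then show ?thesis unfolding f_def by simp
  qed
  have Meq: "M = matpow B (2*n - 1) - matpow B (2*n)"
    unfolding M_def A_def B_def by (rule key_identity[OF pP1 pP2 n])
  have Mv: "M *v x = f lam *\<^sub>R x" if "B *v x = lam *\<^sub>R x" for x lam
  proof -
    have e: "lam * lam ^ (n * 2 - Suc 0) = lam ^ (n * 2)"
    proof -
      have "n * 2 = Suc (n * 2 - Suc 0)" using n by simp
      then show ?thesis by (metis power_Suc)
    qed
    show ?thesis unfolding Meq f_def using matpow_eig[OF that]
      by (simp add: mat_diff_mv e algebra_simps)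
  qed
  have Msym: "transpose M = M" unfolding M_def by (simp add: matrix_transpose_mul)
  have Bsym: "transpose B = B" using pP1 pP2 unfolding B_def proj_def
    by (simp add: matrix_transpose_mul matrix_mul_assoc)
  have BM: "B ** M = M ** B" unfolding Meq by (simp add: mat_ldiff mat_rdiff matpow_comm)
  have normA: "(A *v y) \<bullet> (A *v y) = y \<bullet> (M *v y)" for y
    unfolding M_def by (simp add: mv_inner matrix_vector_mul_assoc)
  have ne: "(vec 1 :: real^'d) \<noteq> 0" by (simp add: vec_eq_iff)
  obtain x1 mu where x1: "norm x1 = 1" "M *v x1 = mu *\<^sub>R x1" and mubound: "\<forall>y. y \<bullet> (M *v y) \<le> mu * (y \<bullet> y)"
    using eig_max[OF Msym subspace_UNIV _ _ ne] by auto
  have x1x1: "x1 \<bullet> x1 = 1" using x1(1) by (simp add: dot_square_norm)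
  have mu_eq: "mu = (A *v x1) \<bullet> (A *v x1)" using normA[of x1] x1(2) x1x1 by simp
  have mu0: "mu \<ge> 0" using mu_eq by simp
  have spec: "spec_norm A = sqrt mu"
  proof (rule antisym)
    show "spec_norm A \<le> sqrt mu" unfolding spec_norm_def
    proof (rule onorm_le)
      fix y
      have "norm (A *v y) ^ 2 \<le> mu * norm y ^ 2"
        using mubound normA[of y] by (simp add: dot_square_norm)
      then have "sqrt (norm (A *v y) ^ 2) \<le> sqrt (mu * norm y ^ 2)" by (rule real_sqrt_le_mono)
      then show "norm (A *v y) \<le> sqrt mu * norm y" by (simp add: real_sqrt_mult)
    qed
    have "norm (A *v x1) \<le> onorm (\<lambda>x. A *v x) * norm x1"
      by (rule onorm) (simp add: matrix_vector_mul_bounded_linear)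
    moreover have "norm (A *v x1) = sqrt mu" using mu_eq by (simp add: norm_eq_sqrt_inner)
    ultimately show "sqrt mu \<le> spec_norm A" using x1(1) by (simp add: spec_norm_def)
  qed
  have LHS: "(spec_norm ((mat 1 - P1) ** matpow (P2 ** P1) n))\<^sup>2 = mu"
    using spec mu0 unfolding A_def by simp
  define E where "E = {x. M *v x = mu *\<^sub>R x}"
  have Esub: "subspace E" unfolding E_def subspace_def
    by (auto simp: matrix_vector_right_distrib matrix_vector_mult_scaleR algebra_simps)
  have Einv: "B *v x \<in> E" if "x \<in> E" for x
  proof -
    have "M *v (B *v x) = B *v (M *v x)" by (simp add: matrix_vector_mul_assoc BM)
    then show ?thesis using that unfolding E_def by (simp add: matrix_vector_mult_scaleR)
  qed
  have x1E: "x1 \<in> E" "x1 \<noteq> 0" using x1 by (auto simp: E_def)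
  obtain x2 lam where x2: "x2 \<in> E" "norm x2 = 1" "B *v x2 = lam *\<^sub>R x2"
    using eig_max[OF Bsym Esub Einv x1E] by auto
  have x20: "x2 \<noteq> 0" using x2(2) by auto
  have mu_f: "mu = f lam"
  proof -
    have "mu *\<^sub>R x2 = f lam *\<^sub>R x2" using x2 Mv[OF x2(3)] by (auto simp: E_def)
    then show ?thesis using x20 by simp
  qed
  have lam01: "0 \<le> lam \<and> lam \<le> 1" using eigB_range[OF pP1 pP2 _ x20] x2(3) unfolding B_def by simp
  have fge: "f t \<ge> 0" if "0 \<le> t" "t \<le> 1" for t unfolding f_def using that by simp
  have fle: "f t \<le> mu" if "B *v z = t *\<^sub>R z" "z \<noteq> 0" for z t
  proof -
    have "f t * (z \<bullet> z) = z \<bullet> (M *v z)" using Mv[OF that(1)] by simp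
    also have "\<dots> \<le> mu * (z \<bullet> z)" using mubound by simp
    finally show ?thesis using that(2) by (simp add: mult_le_cancel_right)
  qed
  have Bv: "B *v z = P1 *v (P2 *v (P1 *v z))" for z unfolding B_def by (simp add: matrix_vector_mul_assoc matrix_mul_assoc)
  let ?S = "{x. Q1 *v x = x}" and ?T = "{x. Q2 *v x = x}"
  define r where "r = n_angles X1 X2"
  have rS: "r = min (dim ?S) (dim ?T)"
    unfolding r_def n_angles_def rank_row_space row_space_eq Q1_def Q2_def ..
  have ex: "\<exists>u v. principal_vectors (row_space X1) (row_space X2) (n_angles X1 X2) u v"
    unfolding row_space_eq n_angles_def rank_row_space
    by (rule pv_exists[OF proj_subspace proj_subspace]) auto
  define pp where "pp = (SOME (u, v). principal_vectors (row_space X1) (row_space X2) (n_angles X1 X2) u v)"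
  define U where "U = fst pp"
  define V where "V = snd pp"
  have pvUV: "principal_vectors ?S ?T r U V"
  proof -
    from ex have "\<exists>p. case p of (u, v) \<Rightarrow> principal_vectors (row_space X1) (row_space X2) (n_angles X1 X2) u v"
      by auto
    then have "case pp of (u, v) \<Rightarrow> principal_vectors (row_space X1) (row_space X2) (n_angles X1 X2) u v"
      unfolding pp_def by (rule someI_ex)
    then show ?thesis unfolding U_def V_def r_def row_space_eq Q1_def Q2_def by (simp add: split_beta)
  qed
  define s where "s i = U i \<bullet> V i" for i
  have ang: "principal_angle X1 X2 i = arccos \<bar>s i\<bar>" for i
    unfolding principal_angle_def s_def U_def V_def pp_def by (simp add: Let_def split_beta)
  have s1: "\<bar>s i\<bar> \<le> 1" if "i < r" for i
  proof -
    have "norm (U i) = 1" "norm (V i) = 1" using pv_basic[OF pvUV that] by auto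
    then show ?thesis unfolding s_def using Cauchy_Schwarz_ineq2[of "U i" "V i"] by simp
  qed
  have cosang: "cos (principal_angle X1 X2 i) = \<bar>s i\<bar>" if "i < r" for i
    unfolding ang using s1[OF that] by (simp add: cos_arccos_abs)
  have angne: "principal_angle X1 X2 i \<noteq> 0 \<longleftrightarrow> \<bar>s i\<bar> \<noteq> 1" if "i < r" for i
  proof -
    have "arccos \<bar>s i\<bar> = arccos 1 \<longleftrightarrow> \<bar>s i\<bar> = 1" using s1[OF that] by (intro arccos_eq_iff) simp
    then show ?thesis unfolding ang by simp
  qed
  define Aset where "Aset = {f ((s i)\<^sup>2) | i. i < r \<and> \<bar>s i\<bar> \<noteq> 1}"
  have setEq: "{(cos (principal_angle X1 X2 i))\<^sup>2 ^ (2*n - 1) * (1 - (cos (principal_angle X1 X2 i))\<^sup>2) | i.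
                i < n_angles X1 X2 \<and> principal_angle X1 X2 i \<noteq> 0} = Aset"
    unfolding Aset_def r_def[symmetric]
  proof (intro set_eqI iffI)
    fix e assume "e \<in> {(cos (principal_angle X1 X2 i))\<^sup>2 ^ (2*n - 1) * (1 - (cos (principal_angle X1 X2 i))\<^sup>2) | i.
                i < r \<and> principal_angle X1 X2 i \<noteq> 0}"
    then obtain i where i: "i < r" "principal_angle X1 X2 i \<noteq> 0"
      "e = (cos (principal_angle X1 X2 i))\<^sup>2 ^ (2*n - 1) * (1 - (cos (principal_angle X1 X2 i))\<^sup>2)" by blast
    have "e = f ((s i)\<^sup>2)" "\<bar>s i\<bar> \<noteq> 1" using i cosang[OF i(1)] angne[OF i(1)] by (auto simp: f_def power2_abs)
    then show "e \<in> {f ((s i)\<^sup>2) | i. i < r \<and> \<bar>s i\<bar> \<noteq> 1}" using i(1) by blast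
  next
    fix e assume "e \<in> {f ((s i)\<^sup>2) | i. i < r \<and> \<bar>s i\<bar> \<noteq> 1}"
    then obtain i where i: "i < r" "\<bar>s i\<bar> \<noteq> 1" "e = f ((s i)\<^sup>2)" by blast
    have "e = (cos (principal_angle X1 X2 i))\<^sup>2 ^ (2*n - 1) * (1 - (cos (principal_angle X1 X2 i))\<^sup>2)"
      "principal_angle X1 X2 i \<noteq> 0" using i cosang[OF i(1)] angne[OF i(1)] by (auto simp: f_def power2_abs)
    then show "e \<in> {(cos (principal_angle X1 X2 i))\<^sup>2 ^ (2*n - 1) * (1 - (cos (principal_angle X1 X2 i))\<^sup>2) | i.
                i < r \<and> principal_angle X1 X2 i \<noteq> 0}" using i(1) by blast
  qed
  have finA: "finite Aset"
  proof -
    have "Aset \<subseteq> (\<lambda>i. f ((s i)\<^sup>2)) ` {..<r}" unfolding Aset_def by auto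
    then show ?thesis by (rule finite_subset) simp
  qed
  have Abound: "0 \<le> e \<and> e \<le> mu" if eA: "e \<in> Aset" for e
  proof -
    obtain i where i: "i < r" "\<bar>s i\<bar> \<noteq> 1" "e = f ((s i)\<^sup>2)" using eA unfolding Aset_def by auto
    have sq1: "(s i)\<^sup>2 \<le> 1" using s1[OF i(1)] by (simp add: abs_square_le_1)
    have "0 \<le> e" using fge[of "(s i)^2"] sq1 i(3) by simp
    moreover have "e \<le> mu"
    proof (cases "s i = 0")
      case True then show ?thesis using i(3) mu0 f0 by simp
    next
      case False
      have lt1: "(s i)\<^sup>2 < 1" using sq1 i(2) s1[OF i(1)]
        by (metis abs_square_eq_1 order_le_less)
      have gt0: "(s i)\<^sup>2 > 0" using False by simp
      note st = pv_struct[OF pQ1 pQ2 pvUV i(1)]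
      have Ui: "Q1 *v U i = U i" "U i \<noteq> 0" using pv_basic[OF pvUV i(1)] by auto
      have "Q1 *v (Q2 *v (Q1 *v U i)) = (s i)\<^sup>2 *\<^sub>R U i"
        using st Ui unfolding s_def by (simp add: matrix_vector_mult_scaleR power2_eq_square)
      from transfer_eig[OF pQ1 pQ2 this Ui(2) gt0 lt1]
      obtain z where "z \<noteq> 0" "(mat 1 - Q1) *v ((mat 1 - Q2) *v ((mat 1 - Q1) *v z)) = (s i)\<^sup>2 *\<^sub>R z"
        by blast
      then have "B *v z = (s i)\<^sup>2 *\<^sub>R z" "z \<noteq> 0" unfolding Bv P1Q P2Q by auto
      then show ?thesis using fle i(3) by blast
    qed
    ultimately show ?thesis by simp
  qed
  have muA: "mu \<in> Aset" if "mu \<noteq> 0"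
  proof -
    have l0: "lam \<noteq> 0" using that mu_f f0 by auto
    have l1: "lam \<noteq> 1" using that mu_f by (auto simp: f_def)
    have "0 < lam" "lam < 1" using l0 l1 lam01 by auto
    from transfer_eig[OF pP1 pP2 _ x20 this] x2(3)
    obtain z where "z \<noteq> 0" "(mat 1 - P1) *v ((mat 1 - P2) *v ((mat 1 - P1) *v z)) = lam *\<^sub>R z"
      unfolding Bv by blast
    then have z: "z \<noteq> 0" "Q1 *v (Q2 *v (Q1 *v z)) = lam *\<^sub>R z" unfolding QP1 QP2 by auto
    have "r = dim ?S \<or> r = dim ?T" using rS by linarith
    from complete_eig[OF pQ1 pQ2 pvUV this z(2) z(1) l0]
    obtain i where i: "i < r" "lam = (U i \<bullet> V i)\<^sup>2" by blast
    have "\<bar>s i\<bar> \<noteq> 1" using i \<open>lam < 1\<close> abs_square_eq_1[of "s i"] unfolding s_def by auto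
    then show ?thesis unfolding Aset_def using i mu_f unfolding s_def by auto
  qed
  have RHS: "(if Aset = {} then 0 else Max Aset) = mu"
  proof (cases "Aset = {}")
    case True then show ?thesis using muA by auto
  next
    case False
    have "mu \<in> Aset"
    proof (cases "mu = 0")
      case True
      obtain e where "e \<in> Aset" using False by auto
      then show ?thesis using Abound True by force
    next
      case False then show ?thesis using muA by simp
    qed
    then have "Max Aset = mu" using finA Abound by (intro Max_eqI) auto
    then show ?thesis using False by simp
  qed
  show ?thesis unfolding LHS setEq Let_def using RHS by simp
qed



end
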